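(* Let $\iota:B\to A$ be an injective homomorphism of groups such that $\iota(B)$ is normal in $A$, and let $q:A\to B$ satisfy (ZL1), (ZL2), (ZL3). Then there is a subgroup $X$ of $A$ such that $A$ is the internal semidirect product $\iota(B)\rtimes X$ (i.e. $\iota(B)\trianglelefteq A$, $\iota(B)X=A$, $\iota(B)\cap X=\{1_A\}$) and $q$ is the projection onto the first factor: $q(\iota(b)x)=b$ for all $b\in B$, $x\in X$.
   Context: For a homomorphism $\iota:B\to A$, conditions on $q:A\to B$: (ZL1) $q(1_A)=1_B$; (ZL2) $q(\iota(b)a)=b\,q(a)$ for all $a\in A,b\in B$; (ZL3) $q(aa')=q(a\,\iota(q(a')))$ for all $a,a'\in A$. These maps are exactly the $\mathsf T^l_\iota$-algebra structures on $(B,m_B)$ (algebras for the monad $A\otimes_B-$ on left $B$-sets induced by $\iota$). *)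

theory Defs
  imports "HOL-Algebra.Algebra"
begin

end

theory Submission
  imports Defs
begin

theorem proposition4p5:
  fixes B :: "('a, 'b) monoid_scheme" and \<iota> :: "'a \<Rightarrow> 'c" and A :: "('c, 'd) monoid_scheme"
    and q :: "'c \<Rightarrow> 'a"
  assumes grpB: "group B" and grpA: "group A"
    and hom: "\<iota> \<in> hom B A"
    and inj: "inj_on \<iota> (carrier B)"
    and nrm: "\<iota> ` carrier B \<lhd> A"
    and q_carrier: "\<forall>a \<in> carrier A. q a \<in> carrier B"
    and ZL1: "q \<one>\<^bsub>A\<^esub> = \<one>\<^bsub>B\<^esub>"
    and ZL2: "\<forall>a \<in> carrier A. \<forall>b \<in> carrier B.
                 q (\<iota> b \<otimes>\<^bsub>A\<^esub> a) = b \<otimes>\<^bsub>B\<^esub> q a"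
    and ZL3: "\<forall>a \<in> carrier A. \<forall>a' \<in> carrier A.
                 q (a \<otimes>\<^bsub>A\<^esub> a') = q (a \<otimes>\<^bsub>A\<^esub> \<iota> (q a'))"
  shows "\<exists>H. subgroup H A
            \<and> set_mult A (\<iota> ` carrier B) H = carrier A
            \<and> \<iota> ` carrier B \<inter> H = {\<one>\<^bsub>A\<^esub> }
            \<and> (\<forall>b \<in> carrier B. \<forall>x \<in> H. q (\<iota> b \<otimes>\<^bsub>A\<^esub> x) = b)"
proof -
  interpret A: group A by (rule grpA)
  interpret B: group B by (rule grpB)
  interpret h: group_hom B A \<iota> using hom grpA grpB by (simp add: group_hom_def group_hom_axioms_def)
  define H where "H = {a \<in> carrier A. q a = \<one>\<^bsub>B\<^esub>}"
  have qi: "q (\<iota> b) = b" if "b \<in> carrier B" for b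
    using ZL2[rule_format, of "\<one>\<^bsub>A\<^esub>" b] that ZL1 by simp
  have sub: "subgroup H A"
  proof (rule A.subgroupI)
    show "H \<subseteq> carrier A" by (auto simp: H_def)
    show "H \<noteq> {}" using ZL1 by (auto simp: H_def)
  next
    fix a assume a: "a \<in> H"
    hence aA: "a \<in> carrier A" and qa: "q a = \<one>\<^bsub>B\<^esub>" by (auto simp: H_def)
    have "q (inv\<^bsub>A\<^esub> a \<otimes>\<^bsub>A\<^esub> a) = q (inv\<^bsub>A\<^esub> a \<otimes>\<^bsub>A\<^esub> \<iota> (q a))"
      using ZL3 aA by (meson A.inv_closed)
    hence "q (inv\<^bsub>A\<^esub> a) = \<one>\<^bsub>B\<^esub>" using aA qa ZL1 by simp
    thus "inv\<^bsub>A\<^esub> a \<in> H" using aA by (simp add: H_def)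
  next
    fix a b assume "a \<in> H" "b \<in> H"
    hence aA: "a \<in> carrier A" and qa: "q a = \<one>\<^bsub>B\<^esub>"
      and bA: "b \<in> carrier A" and qb: "q b = \<one>\<^bsub>B\<^esub>" by (auto simp: H_def)
    have "q (a \<otimes>\<^bsub>A\<^esub> b) = q (a \<otimes>\<^bsub>A\<^esub> \<iota> (q b))" using ZL3 aA bA by simp
    thus "a \<otimes>\<^bsub>A\<^esub> b \<in> H" using aA bA qa qb by (simp add: H_def)
  qed
  have prod: "set_mult A (\<iota> ` carrier B) H = carrier A"
  proof
    show "set_mult A (\<iota> ` carrier B) H \<subseteq> carrier A"
      by (auto simp: set_mult_def H_def)
  next
    show "carrier A \<subseteq> set_mult A (\<iota> ` carrier B) H"
    proof
      fix a assume aA: "a \<in> carrier A"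
      have qaB: "q a \<in> carrier B" using q_carrier aA by simp
      define x where "x = \<iota> (inv\<^bsub>B\<^esub> (q a)) \<otimes>\<^bsub>A\<^esub> a"
      have xA: "x \<in> carrier A" using aA qaB by (simp add: x_def)
      have "q x = inv\<^bsub>B\<^esub> (q a) \<otimes>\<^bsub>B\<^esub> q a" using ZL2[rule_format, of a "inv\<^bsub>B\<^esub> (q a)"] aA qaB unfolding x_def by blast
      hence "x \<in> H" using qaB xA by (simp add: H_def)
      moreover have "a = \<iota> (q a) \<otimes>\<^bsub>A\<^esub> x"
        using aA qaB by (simp add: x_def h.hom_inv A.m_assoc[symmetric])
      ultimately show "a \<in> set_mult A (\<iota> ` carrier B) H"
        using qaB unfolding set_mult_def by blast
    qed
  qed
  have int: "\<iota> ` carrier B \<inter> H = {\<one>\<^bsub>A\<^esub>}"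
  proof
    show "\<iota> ` carrier B \<inter> H \<subseteq> {\<one>\<^bsub>A\<^esub>}"
    proof
      fix y assume "y \<in> \<iota> ` carrier B \<inter> H"
      then obtain b where b: "b \<in> carrier B" "y = \<iota> b" "q y = \<one>\<^bsub>B\<^esub>"
        by (auto simp: H_def)
      hence "b = \<one>\<^bsub>B\<^esub>" using qi by simp
      thus "y \<in> {\<one>\<^bsub>A\<^esub>}" using b by simp
    qed
  next
    show "{\<one>\<^bsub>A\<^esub>} \<subseteq> \<iota> ` carrier B \<inter> H"
      using ZL1 h.hom_one B.one_closed by (auto simp: H_def image_iff intro!: bexI[of _ "\<one>\<^bsub>B\<^esub>"])
  qed
  have proj: "\<forall>b \<in> carrier B. \<forall>x \<in> H. q (\<iota> b \<otimes>\<^bsub>A\<^esub> x) = b"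
    using ZL2 by (auto simp: H_def)
  show ?thesis using sub prod int proj by blast
qed

end
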